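(* Let $\varphi\in C^\infty(\mathbb{R}^3)$ and $\delta=(\bar\delta,\delta_3)\in[0,1]^2$. Then the function $$\mathcal{Q}_{\rho,\delta}\varphi(x):=\int_{\mathbb{R}^3}Q_\rho(z)\,\varphi(x-T_\delta z)\,dz,\qquad x\in\mathbb{R}^3,$$ belongs to $C^\infty(\mathbb{R}^3)$. Moreover, $\nabla\circ\mathcal{Q}_{\rho,\delta}=\mathcal{Q}_{\rho,\delta}\circ\nabla$ on $C^\infty(\mathbb{R}^3)$ and $\operatorname{div}\circ\mathcal{Q}_{\rho,\delta}=\mathcal{Q}_{\rho,\delta}\circ\operatorname{div}$ on $C^\infty(\mathbb{R}^3;\mathbb{R}^3)$ (with $\mathcal{Q}_{\rho,\delta}$ acting componentwise), and, writing $D_{\rho,\delta}:=\nabla\circ\mathcal{Q}_{\rho,\delta}$ and $\mathrm{Div}_{\rho,\delta}:=\operatorname{div}\circ\mathcal{Q}_{\rho,\delta}$, the integration by parts formula $$\int_{\mathbb{R}^3}D_{\rho,\delta}\varphi\cdot\psi\,dx=-\int_{\mathbb{R}^3}\varphi\,\mathrm{Div}_{\rho,\delta}\psi\,dx$$ holds for all $\varphi\in C_c^\infty(\mathbb{R}^3)$ and $\psi\in C_c^\infty(\mathbb{R}^3;\mathbb{R}^3)$.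
   Context: For $r=(\bar r,r_3)\in[0,\infty)^2$ let $T_r$ be the diagonal matrix $\mathrm{diag}(\bar r,\bar r,r_3)$. The kernel $\rho:\mathbb{R}^3\setminus\{0\}\to[0,\infty)$ is radial, $\rho(z)=\rho^{\rm rad}(|z|)$, and satisfies the following for some $\eta_0>0$, $\nu>0$, $0<\sigma\le\gamma<1$: (H0) $\inf_{B_{\eta_0}(0)}\rho>0$, $\operatorname{supp}\rho=\overline{B_1(0)}$ and $\int_{\mathbb{R}^3}\rho\,dz=3$; (H1) with $f_\rho(r):=r\rho^{\rm rad}(r)$, the map $r\mapsto r^\nu f_\rho(r)$ is non-increasing on $(0,\infty)$; (H2) $f_\rho$ is smooth on $(0,\infty)$ and for each $k\in\mathbb{N}$ there is $C_k>0$ with $|f_\rho^{(k)}(r)|\le C_kf_\rho(r)/r^k$ for $r\in(0,\eta_0)$; (H3) $r\mapsto r^{2+\sigma}\rho^{\rm rad}(r)$ is almost non-increasing on $(0,\eta_0)$; (H4) $r\mapsto r^{2+\gamma}\rho^{\rm rad}(r)$ is almost non-decreasing on $(0,\eta_0)$. Here $f$ is almost non-increasing (resp. non-decreasing) on an interval if there is $C>0$ with $f(t_1)\ge Cf(t_2)$ (resp. $f(t_1)\le Cf(t_2)$) for all $t_1<t_2$ in it. Set $Q_\rho(z):=\int_{|z|}^\infty\frac{\rho^{\rm rad}(t)}{t}\,dt$ for $z\ne0$. *)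

theory Defs
  imports "HOL-Analysis.Analysis"
begin

definition partial :: "3 \<Rightarrow> (real^3 \<Rightarrow> real) \<Rightarrow> real^3 \<Rightarrow> real" where
  "partial i f x = frechet_derivative f (at x) (axis i 1)"

fun Ck :: "nat \<Rightarrow> (real^3 \<Rightarrow> real) \<Rightarrow> bool" where
  "Ck 0 f = continuous_on UNIV f"
| "Ck (Suc k) f = (f differentiable_on UNIV \<and> continuous_on UNIV f \<and> (\<forall>i. Ck k (partial i f)))"

definition smooth3 :: "(real^3 \<Rightarrow> real) \<Rightarrow> bool" where
  "smooth3 f \<longleftrightarrow> (\<forall>k. Ck k f)"

definition smooth3_field :: "(real^3 \<Rightarrow> real^3) \<Rightarrow> bool" where
  "smooth3_field F \<longleftrightarrow> (\<forall>i. smooth3 (\<lambda>x. F x $ i))"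

definition compact_support :: "(real^3 \<Rightarrow> 'b::zero) \<Rightarrow> bool" where
  "compact_support f \<longleftrightarrow> compact (closure {x. f x \<noteq> 0})"

definition grad3 :: "(real^3 \<Rightarrow> real) \<Rightarrow> real^3 \<Rightarrow> real^3" where
  "grad3 f x = (\<chi> i. partial i f x)"

definition div3 :: "(real^3 \<Rightarrow> real^3) \<Rightarrow> real^3 \<Rightarrow> real" where
  "div3 F x = (\<Sum>i\<in>UNIV. partial i (\<lambda>y. F y $ i) x)"

definition Tmat :: "real \<Rightarrow> real \<Rightarrow> real^3 \<Rightarrow> real^3" where
  "Tmat rb r3 z = (\<chi> i. (if i = 3 then r3 else rb) * z $ i)"

definition Qrho :: "(real \<Rightarrow> real) \<Rightarrow> real^3 \<Rightarrow> real" where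
  "Qrho rhorad z = (LINT t:{norm z..}|lborel. rhorad t / t)"

definition Qop :: "(real \<Rightarrow> real) \<Rightarrow> real \<Rightarrow> real \<Rightarrow> (real^3 \<Rightarrow> real) \<Rightarrow> real^3 \<Rightarrow> real" where
  "Qop rhorad db d3 \<phi> x = (LINT z|lborel. Qrho rhorad z * \<phi> (x - Tmat db d3 z))"

definition Qop_vec :: "(real \<Rightarrow> real) \<Rightarrow> real \<Rightarrow> real \<Rightarrow> (real^3 \<Rightarrow> real^3) \<Rightarrow> real^3 \<Rightarrow> real^3" where
  "Qop_vec rhorad db d3 F x = (\<chi> i. Qop rhorad db d3 (\<lambda>y. F y $ i) x)"

definition kernel_hyps :: "(real \<Rightarrow> real) \<Rightarrow> real \<Rightarrow> real \<Rightarrow> real \<Rightarrow> real \<Rightarrow> bool" where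
  "kernel_hyps rhorad \<eta>0 \<nu> \<sigma> \<gamma> \<longleftrightarrow>
     \<eta>0 > 0 \<and> \<nu> > 0 \<and> 0 < \<sigma> \<and> \<sigma> \<le> \<gamma> \<and> \<gamma> < 1 \<and>
     (\<forall>r>0. rhorad r \<ge> 0) \<and>
     \<comment> \<open>(H0)\<close>
     (\<exists>c>0. \<forall>z::real^3. z \<noteq> 0 \<and> norm z < \<eta>0 \<longrightarrow> rhorad (norm z) \<ge> c) \<and>
     closure {z::real^3. z \<noteq> 0 \<and> rhorad (norm z) \<noteq> 0} = cball 0 1 \<and>
     integrable lborel (\<lambda>z::real^3. rhorad (norm z)) \<and>
     (LINT z|lborel. rhorad (norm (z::real^3))) = 3 \<and>
     \<comment> \<open>(H1)\<close>
     (\<forall>r s. 0 < r \<and> r \<le> s \<longrightarrow> s powr \<nu> * (s * rhorad s) \<le> r powr \<nu> * (r * rhorad r)) \<and>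
     \<comment> \<open>(H2)\<close>
     (\<forall>k. \<forall>r>0. (((deriv ^^ k) (\<lambda>t. t * rhorad t)) has_real_derivative
                   ((deriv ^^ Suc k) (\<lambda>t. t * rhorad t)) r) (at r)) \<and>
     (\<forall>k::nat. \<exists>C>0. \<forall>r. 0 < r \<and> r < \<eta>0 \<longrightarrow>
        \<bar>(deriv ^^ k) (\<lambda>t. t * rhorad t) r\<bar> \<le> C * (r * rhorad r) / r ^ k) \<and>
     \<comment> \<open>(H3)\<close>
     (\<exists>C>0. \<forall>t1 t2. 0 < t1 \<and> t1 < t2 \<and> t2 < \<eta>0 \<longrightarrow>
        t1 powr (2 + \<sigma>) * rhorad t1 \<ge> C * (t2 powr (2 + \<sigma>) * rhorad t2)) \<and>
     \<comment> \<open>(H4)\<close>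
     (\<exists>C>0. \<forall>t1 t2. 0 < t1 \<and> t1 < t2 \<and> t2 < \<eta>0 \<longrightarrow>
        t1 powr (2 + \<gamma>) * rhorad t1 \<le> C * (t2 powr (2 + \<gamma>) * rhorad t2))"

end

theory Submission
  imports Defs "HOL-Analysis.Analysis"
begin



definition opK :: "(real^3 \<Rightarrow> real) \<Rightarrow> (real^3 \<Rightarrow> real^3) \<Rightarrow> (real^3 \<Rightarrow> real) \<Rightarrow> real^3 \<Rightarrow> real" where
  "opK K L g x = (LINT z|lborel. K z * g (x - L z))"

lemma cont_bound_compact:
  fixes g :: "'a::metric_space \<Rightarrow> real"
  assumes "continuous_on S g" "compact S"
  shows "\<exists>M. \<forall>y\<in>S. \<bar>g y\<bar> \<le> M"
proof -
  have "compact (g ` S)" using assms compact_continuous_image by blast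
  then have "bounded (g ` S)" by (rule compact_imp_bounded)
  then obtain M where "\<forall>u\<in>g ` S. norm u \<le> M" unfolding bounded_iff by blast
  then show ?thesis by auto
qed

locale kop =
  fixes K :: "real^3 \<Rightarrow> real" and L :: "real^3 \<Rightarrow> real^3" and R :: real
  assumes Kmeas[measurable]: "K \<in> borel_measurable borel"
    and Kint: "integrable lborel K"
    and Ksupp: "\<And>z. norm z > R \<Longrightarrow> K z = 0"
    and Llin: "bounded_linear L"
    and Rpos: "R > 0"
begin

lemma Lcont: "continuous_on UNIV L"
  using Llin linear_continuous_on by blast

lemma Lbound: "\<exists>B>0. \<forall>z. norm (L z) \<le> norm z * B"
  using bounded_linear.pos_bounded[OF Llin] by blast

lemma meas_comp:
  assumes "continuous_on UNIV g"
  shows "(\<lambda>z. K z * g (x - L z)) \<in> borel_measurable lborel"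
proof -
  have "continuous_on UNIV (\<lambda>z. g (x - L z))"
    by (rule continuous_on_compose2[OF assms]) (auto intro!: continuous_intros continuous_on_subset[OF Lcont])
  then have "(\<lambda>z. g (x - L z)) \<in> borel_measurable borel"
    by (rule borel_measurable_continuous_onI)
  then show ?thesis by simp
qed

lemma bound_on_ball:
  fixes g :: "real^3 \<Rightarrow> real"
  assumes "continuous_on UNIV g"
  shows "\<exists>M. \<forall>z. norm z \<le> R \<longrightarrow> \<bar>g (x - L z)\<bar> \<le> M"
proof -
  have "continuous_on (cball 0 R) (\<lambda>z. g (x - L z))"
    by (rule continuous_on_compose2[OF assms]) (auto intro!: continuous_intros continuous_on_subset[OF Lcont])
  then have "\<exists>M. \<forall>z\<in>cball 0 R. \<bar>g (x - L z)\<bar> \<le> M"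
    by (rule cont_bound_compact[OF _ compact_cball])
  then obtain M where "\<forall>z\<in>cball 0 R. \<bar>g (x - L z)\<bar> \<le> M" by blast
  then show ?thesis by (intro exI[of _ M]) (auto simp: mem_cball dist_norm)
qed

lemma int_op:
  assumes "continuous_on UNIV g"
  shows "integrable lborel (\<lambda>z. K z * g (x - L z))"
proof -
  obtain M where M: "\<forall>z. norm z \<le> R \<longrightarrow> \<bar>g (x - L z)\<bar> \<le> M"
    using bound_on_ball[OF assms] by blast
  show ?thesis
  proof (rule Bochner_Integration.integrable_bound[where f="\<lambda>z. M * K z"])
    show "integrable lborel (\<lambda>z. M * K z)" using Kint by simp
    show "(\<lambda>z. K z * g (x - L z)) \<in> borel_measurable lborel" by (rule meas_comp[OF assms])
    show "AE z in lborel. norm (K z * g (x - L z)) \<le> norm (M * K z)"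
    proof (rule AE_I2)
      fix z
      show "norm (K z * g (x - L z)) \<le> norm (M * K z)"
      proof (cases "norm z > R")
        case True then show ?thesis using Ksupp by simp
      next
        case False
        then have "\<bar>g (x - L z)\<bar> \<le> M" using M by auto
        then have "\<bar>K z\<bar> * \<bar>g (x - L z)\<bar> \<le> \<bar>K z\<bar> * \<bar>M\<bar>"
          by (intro mult_left_mono) auto
        then show ?thesis by (simp add: abs_mult mult.commute)
      qed
    qed
  qed
qed

definition NK where "NK = (LINT z|lborel. \<bar>K z\<bar>)"

lemma NK_nonneg: "NK \<ge> 0" unfolding NK_def by simp

lemma estimate:
  assumes i1: "integrable lborel (\<lambda>z. K z * ha z)" and i2: "integrable lborel (\<lambda>z. K z * hb z)"
    and b: "\<And>z. norm z \<le> R \<Longrightarrow> \<bar>ha z - hb z\<bar> \<le> e"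
  shows "\<bar>(LINT z|lborel. K z * ha z) - (LINT z|lborel. K z * hb z)\<bar> \<le> e * NK"
proof -
  have "(LINT z|lborel. K z * ha z) - (LINT z|lborel. K z * hb z) = (LINT z|lborel. K z * ha z - K z * hb z)"
    using i1 i2 by simp
  also have "\<bar>\<dots>\<bar> \<le> (LINT z|lborel. \<bar>K z * ha z - K z * hb z\<bar>)"
    by (rule integral_abs_bound)
  also have "\<dots> \<le> (LINT z|lborel. e * \<bar>K z\<bar>)"
  proof (rule integral_mono)
    show "integrable lborel (\<lambda>z. \<bar>K z * ha z - K z * hb z\<bar>)" using i1 i2 by auto
    show "integrable lborel (\<lambda>z. e * \<bar>K z\<bar>)" using Kint by auto
    fix z
    show "\<bar>K z * ha z - K z * hb z\<bar> \<le> e * \<bar>K z\<bar>"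
    proof (cases "norm z > R")
      case True then show ?thesis using Ksupp by simp
    next
      case False
      then have "\<bar>ha z - hb z\<bar> \<le> e" using b by auto
      then have "\<bar>K z\<bar> * \<bar>ha z - hb z\<bar> \<le> \<bar>K z\<bar> * e" by (intro mult_left_mono) auto
      then show ?thesis by (simp add: abs_mult mult.commute right_diff_distrib[symmetric])
    qed
  qed
  also have "\<dots> = e * NK" unfolding NK_def by simp
  finally show ?thesis .
qed

end



context kop begin

lemma op_cont:
  fixes g :: "real^3 \<Rightarrow> real"
  assumes g: "continuous_on UNIV g"
  shows "continuous_on UNIV (opK K L g)"
proof -
  obtain B where B: "B > 0" "\<forall>z. norm (L z) \<le> norm z * B" using Lbound by blast
  have "isCont (opK K L g) x0" for x0
  proof -
    define C where "C = cball (0::real^3) (norm x0 + 1 + R * B)"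
    have uc: "uniformly_continuous_on C g"
      using compact_uniformly_continuous[OF continuous_on_subset[OF g]] compact_cball C_def by auto
    show ?thesis unfolding continuous_at_eps_delta
    proof (intro allI impI)
      fix e :: real assume e: "e > 0"
      define e' where "e' = e / (NK + 1)"
      have e': "e' > 0" using e NK_nonneg by (simp add: e'_def)
      obtain d where d: "d > 0" "\<forall>y\<in>C. \<forall>y'\<in>C. dist y' y < d \<longrightarrow> dist (g y') (g y) < e'"
        using uc e' unfolding uniformly_continuous_on_def by blast
      show "\<exists>d>0. \<forall>x. dist x x0 < d \<longrightarrow> dist (opK K L g x) (opK K L g x0) < e"
      proof (intro exI[of _ "min d 1"] conjI allI impI)
        show "min d 1 > 0" using d by simp
        fix x assume x: "dist x x0 < min d 1"
        have "\<bar>opK K L g x - opK K L g x0\<bar> \<le> e' * NK"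
          unfolding opK_def
        proof (rule estimate[where ha="\<lambda>z. g (x - L z)" and hb="\<lambda>z. g (x0 - L z)", OF int_op[OF g] int_op[OF g]])
          fix z :: "real^3" assume z: "norm z \<le> R"
          have Lz: "norm (L z) \<le> R * B" using B z by (metis mult_right_mono less_le order_trans)
          have nx: "norm x \<le> norm x0 + 1"
            using x norm_triangle_sub[of x x0] by (simp add: dist_norm)
          have "norm (x - L z) \<le> norm x + norm (L z)" by (rule norm_triangle_ineq4)
          moreover have "norm (x0 - L z) \<le> norm x0 + norm (L z)" by (rule norm_triangle_ineq4)
          ultimately have "x - L z \<in> C" "x0 - L z \<in> C" using nx Lz by (auto simp: C_def)
          moreover have "dist (x - L z) (x0 - L z) < d" using x by (simp add: dist_norm)
          ultimately have "dist (g (x - L z)) (g (x0 - L z)) < e'" using d by blast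
          then show "\<bar>g (x - L z) - g (x0 - L z)\<bar> \<le> e'" by (simp add: dist_real_def)
        qed
        also have "e' * NK < e"
          using e NK_nonneg by (simp add: e'_def field_simps)
        finally show "dist (opK K L g x) (opK K L g x0) < e" by (simp add: dist_real_def)
      qed
    qed
  qed
  then show ?thesis by (simp add: continuous_at_imp_continuous_on)
qed

end



lemma frechet_partial:
  fixes g :: "real^3 \<Rightarrow> real"
  assumes "g differentiable (at y)"
  shows "(g has_derivative (\<lambda>h. \<Sum>i\<in>UNIV. h$i * partial i g y)) (at y)"
proof -
  let ?D = "frechet_derivative g (at y)"
  have d: "(g has_derivative ?D) (at y)" using assms frechet_derivative_works by blast
  have lin: "linear ?D" using has_derivative_linear[OF d] .
  have "?D h = (\<Sum>i\<in>UNIV. h$i * partial i g y)" for h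
  proof -
    have "?D h = ?D (\<Sum>i\<in>UNIV. h$i *\<^sub>R axis i 1)"
      using basis_expansion[of h] by (simp add: scalar_mult_eq_scaleR)
    also have "\<dots> = (\<Sum>i\<in>UNIV. h$i * ?D (axis i 1))"
      using lin by (simp add: linear_sum linear_scale)
    finally show ?thesis by (simp add: partial_def)
  qed
  then have "?D = (\<lambda>h. \<Sum>i\<in>UNIV. h$i * partial i g y)" by auto
  then show ?thesis using d by simp
qed

lemma onorm_partial_bound:
  fixes g :: "real^3 \<Rightarrow> real"
  shows "onorm (\<lambda>h. (\<Sum>i\<in>UNIV. h$i * partial i g w) - (\<Sum>i\<in>UNIV. h$i * partial i g y))
    \<le> 3 * dist (\<chi> i. partial i g w) (\<chi> i. partial i g y)"
proof (rule onorm_le)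
  fix h :: "real^3"
  let ?P = "\<lambda>y. (\<chi> i. partial i g y)"
  have "\<bar>(\<Sum>i\<in>UNIV. h$i * partial i g w) - (\<Sum>i\<in>UNIV. h$i * partial i g y)\<bar>
      = \<bar>\<Sum>i\<in>UNIV. h$i * (partial i g w - partial i g y)\<bar>"
    by (simp add: sum_subtractf right_diff_distrib)
  also have "\<dots> \<le> (\<Sum>i\<in>UNIV. \<bar>h$i * (partial i g w - partial i g y)\<bar>)"
    by (rule sum_abs)
  also have "\<dots> \<le> (\<Sum>i\<in>(UNIV::3 set). norm h * dist (?P w) (?P y))"
  proof (rule sum_mono)
    fix i :: 3
    have a: "\<bar>h$i\<bar> \<le> norm h" by (rule component_le_norm_cart)
    have "\<bar>partial i g w - partial i g y\<bar> = \<bar>(?P w - ?P y)$i\<bar>" by simp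
    also have "\<dots> \<le> norm (?P w - ?P y)" by (rule component_le_norm_cart)
    finally have b: "\<bar>partial i g w - partial i g y\<bar> \<le> dist (?P w) (?P y)" by (simp add: dist_norm)
    show "\<bar>h$i * (partial i g w - partial i g y)\<bar> \<le> norm h * dist (?P w) (?P y)"
      unfolding abs_mult by (intro mult_mono a b) auto
  qed
  also have "\<dots> = 3 * dist (?P w) (?P y) * norm h" by simp
  finally show "norm ((\<Sum>i\<in>UNIV. h$i * partial i g w) - (\<Sum>i\<in>UNIV. h$i * partial i g y))
      \<le> 3 * dist (?P w) (?P y) * norm h" by simp
qed




context kop begin

lemma op_deriv:
  fixes g :: "real^3 \<Rightarrow> real"
  assumes gd: "\<And>y. g differentiable (at y)" and gp: "\<And>i. continuous_on UNIV (partial i g)"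
  shows "(opK K L g has_derivative (\<lambda>h. \<Sum>i\<in>UNIV. h$i * opK K L (partial i g) x0)) (at x0)"
proof -
  have gc: "continuous_on UNIV g"
    using gd differentiable_imp_continuous_within continuous_at_imp_continuous_on by blast
  define P where "P y = (\<chi> i. partial i g y)" for y
  have Pc: "continuous_on UNIV P" unfolding P_def by (intro continuous_on_vec_lambda gp)
  obtain B where B: "B > 0" "\<forall>z. norm (L z) \<le> norm z * B" using Lbound by blast
  define C where "C = cball (0::real^3) (norm x0 + 1 + R * B)"
  have uc: "uniformly_continuous_on C P"
    using compact_uniformly_continuous[OF continuous_on_subset[OF Pc]] compact_cball C_def by auto
  define D where "D h = (\<Sum>i\<in>UNIV. h$i * opK K L (partial i g) x0)" for h
  have blD: "bounded_linear D" unfolding D_def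
    by (intro bounded_linear_sum bounded_linear_compose[OF bounded_linear_mult_left bounded_linear_vec_nth])
  have intp: "integrable lborel (\<lambda>z. K z * partial i g (x - L z))" for i x
    by (rule int_op[OF gp])
  have intg: "integrable lborel (\<lambda>z. K z * g (x - L z))" for x
    by (rule int_op[OF gc])
  have main: "\<exists>d>0. \<forall>y. norm (y - x0) < d \<longrightarrow>
      norm (opK K L g y - opK K L g x0 - D (y - x0)) \<le> e * norm (y - x0)" if e: "e > 0" for e
  proof -
    define e' where "e' = e / (3 * (NK + 1))"
    have e': "e' > 0" using e NK_nonneg by (simp add: e'_def)
    obtain d where d: "d > 0" "\<forall>y\<in>C. \<forall>y'\<in>C. dist y' y < d \<longrightarrow> dist (P y') (P y) < e'"
      using uc e' unfolding uniformly_continuous_on_def by blast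
    show ?thesis
    proof (intro exI[of _ "min d 1"] conjI allI impI)
      show "min d 1 > 0" using d by simp
      fix y assume y: "norm (y - x0) < min d 1"
      define h where "h = y - x0"
      have hb: "norm h < min d 1" using y h_def by simp
      have split: "opK K L g x0 + D h =
          (LINT z|lborel. K z * (g (x0 - L z) + (\<Sum>i\<in>UNIV. h$i * partial i g (x0 - L z))))"
      proof -
        have "(LINT z|lborel. K z * (g (x0 - L z) + (\<Sum>i\<in>UNIV. h$i * partial i g (x0 - L z))))
           = (LINT z|lborel. K z * g (x0 - L z) + (\<Sum>i\<in>UNIV. h$i * (K z * partial i g (x0 - L z))))"
          by (simp add: distrib_left sum_distrib_left mult.left_commute)
        also have "\<dots> = (LINT z|lborel. K z * g (x0 - L z)) + (LINT z|lborel. (\<Sum>i\<in>UNIV. h$i * (K z * partial i g (x0 - L z))))"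
          by (rule Bochner_Integration.integral_add) (use intg intp in auto)
        also have "(LINT z|lborel. (\<Sum>i\<in>UNIV. h$i * (K z * partial i g (x0 - L z))))
            = (\<Sum>i\<in>UNIV. (LINT z|lborel. h$i * (K z * partial i g (x0 - L z))))"
          by (rule Bochner_Integration.integral_sum) (use intp in auto)
        also have "\<dots> = D h" unfolding D_def opK_def by simp
        finally show ?thesis unfolding opK_def by simp
      qed
      have i2: "integrable lborel (\<lambda>z. K z * (g (x0 - L z) + (\<Sum>i\<in>UNIV. h$i * partial i g (x0 - L z))))"
      proof -
        have "integrable lborel (\<lambda>z. K z * g (x0 - L z) + (\<Sum>i\<in>UNIV. h$i * (K z * partial i g (x0 - L z))))"
          by (intro Bochner_Integration.integrable_add Bochner_Integration.integrable_sum integrable_mult_right intg intp)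
        then show ?thesis by (simp add: distrib_left sum_distrib_left mult.left_commute)
      qed
      have "\<bar>opK K L g y - (opK K L g x0 + D h)\<bar> \<le> (norm h * (3 * e')) * NK"
        unfolding split unfolding opK_def
      proof (rule estimate[where ha="\<lambda>z. g (y - L z)", OF intg i2])
        fix z :: "real^3" assume z: "norm z \<le> R"
        define a where "a = x0 - L z"
        have Lz: "norm (L z) \<le> R * B" using B z by (metis mult_right_mono less_le order_trans)
        have ya: "y - L z = a + h" unfolding a_def h_def by simp
        have aC: "norm a \<le> norm x0 + R * B" unfolding a_def using Lz norm_triangle_ineq4[of x0 "L z"] by simp
        let ?S = "ball a (min d 1)"
        have "norm (g (a + h) - g a - (\<Sum>i\<in>UNIV. (a + h - a)$i * partial i g a)) \<le> norm (a + h - a) * (3 * e')"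
        proof (rule differentiable_bound_linearization[where S="?S" and f'="\<lambda>y h. \<Sum>i\<in>UNIV. h$i * partial i g y"])
          fix t :: real assume "t \<in> {0..1}"
          then have "norm (t *\<^sub>R h) \<le> norm h" by (auto intro: mult_left_le_one_le)
          then show "a + t *\<^sub>R (a + h - a) \<in> ?S" using hb by (simp add: dist_norm)
        next
          fix w assume "w \<in> ?S"
          then show "(g has_derivative (\<lambda>h. \<Sum>i\<in>UNIV. h$i * partial i g w)) (at w within ?S)"
            using frechet_partial[OF gd] has_derivative_at_withinI by blast
        next
          fix w assume w: "w \<in> ?S"
          have "onorm ((\<lambda>h. \<Sum>i\<in>UNIV. h$i * partial i g w) - (\<lambda>h. \<Sum>i\<in>UNIV. h$i * partial i g a))
            = onorm (\<lambda>h. (\<Sum>i\<in>UNIV. h$i * partial i g w) - (\<Sum>i\<in>UNIV. h$i * partial i g a))"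
            by (simp add: fun_diff_def)
          also have "\<dots> \<le> 3 * dist (P w) (P a)" unfolding P_def by (rule onorm_partial_bound)
          also have "\<dots> \<le> 3 * e'"
          proof -
            have wa: "dist w a < min d 1" using w by (simp add: dist_commute)
            have "norm w \<le> norm a + 1" using wa norm_triangle_sub[of w a] by (simp add: dist_norm)
            then have "w \<in> C" "a \<in> C" using aC by (auto simp: C_def)
            then have "dist (P w) (P a) < e'" using d wa by auto
            then show ?thesis by simp
          qed
          finally show "onorm ((\<lambda>h. \<Sum>i\<in>UNIV. h$i * partial i g w) - (\<lambda>h. \<Sum>i\<in>UNIV. h$i * partial i g a)) \<le> 3 * e'" .
        next
          show "a \<in> ?S" using hb d by simp
        qed
        then show "\<bar>g (y - L z) - (g (x0 - L z) + (\<Sum>i\<in>UNIV. h$i * partial i g (x0 - L z)))\<bar> \<le> norm h * (3 * e')"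
          unfolding ya a_def by (simp add: algebra_simps)
      qed
      also have "(norm h * (3 * e')) * NK \<le> e * norm h"
      proof -
        have "3 * e' * NK \<le> e" using e NK_nonneg by (simp add: e'_def field_simps)
        then show ?thesis using mult_left_mono[of "3 * e' * NK" e "norm h"] by (simp add: mult_ac)
      qed
      finally show "norm (opK K L g y - opK K L g x0 - D (y - x0)) \<le> e * norm (y - x0)"
        unfolding h_def by (simp add: algebra_simps)
    qed
  qed
  have "(opK K L g has_derivative D) (at x0)"
    unfolding has_derivative_at_alt using blD main by blast
  then show ?thesis unfolding D_def .
qed

end



lemma Ck_cont: "Ck k f \<Longrightarrow> continuous_on UNIV f"
  by (cases k) simp_all

lemma Ck_diff: "Ck (Suc k) f \<Longrightarrow> f differentiable (at y)"
  by (auto simp: differentiable_on_def)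

lemma Ck_pcont: "Ck (Suc k) f \<Longrightarrow> continuous_on UNIV (partial i f)"
  using Ck_cont by auto

lemma smooth3_C1: "smooth3 f \<Longrightarrow> Ck (Suc 0) f"
  unfolding smooth3_def by blast

lemma smooth3_partial:
  assumes "smooth3 f" shows "smooth3 (partial i f)"
  unfolding smooth3_def
proof
  fix k
  have "Ck (Suc k) f" using assms unfolding smooth3_def by blast
  then show "Ck k (partial i f)" by simp
qed

context kop begin

lemma partial_op:
  fixes g :: "real^3 \<Rightarrow> real"
  assumes gd: "\<And>y. g differentiable (at y)" and gp: "\<And>i. continuous_on UNIV (partial i g)"
  shows "partial i (opK K L g) x = opK K L (partial i g) x"
proof -
  have "(\<lambda>h. \<Sum>j\<in>UNIV. h$j * opK K L (partial j g) x) = frechet_derivative (opK K L g) (at x)"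
    by (rule frechet_derivative_at[OF op_deriv[OF gd gp]])
  then have "partial i (opK K L g) x = (\<Sum>j\<in>UNIV. (axis i (1::real))$j * opK K L (partial j g) x)"
    unfolding partial_def by (simp only: fun_eq_iff)
  also have "\<dots> = (\<Sum>j\<in>UNIV. if j = i then opK K L (partial j g) x else 0)"
    by (intro sum.cong) (auto simp: axis_def)
  also have "\<dots> = opK K L (partial i g) x"
    by simp
  finally show ?thesis .
qed

lemma partial_op_fun:
  assumes "Ck (Suc k) g"
  shows "partial i (opK K L g) = opK K L (partial i g)"
  using partial_op[OF Ck_diff[OF assms] Ck_pcont[OF assms]] by blast

lemma Ck_op: "Ck k g \<Longrightarrow> Ck k (opK K L g)"
proof (induction k arbitrary: g)
  case 0 then show ?case using op_cont by simp
next
  case (Suc k)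
  have "opK K L g differentiable (at y)" for y
    using op_deriv[OF Ck_diff[OF Suc.prems] Ck_pcont[OF Suc.prems]] differentiableI by blast
  then have "opK K L g differentiable_on UNIV" by (simp add: differentiable_on_def)
  moreover have "continuous_on UNIV (opK K L g)"
    using op_cont Ck_cont[OF Suc.prems] by blast
  moreover have "Ck k (partial i (opK K L g))" for i
    unfolding partial_op_fun[OF Suc.prems] using Suc.IH Suc.prems by simp
  ultimately show ?case by simp
qed

end



lemma integrable_cs:
  fixes f :: "real^3 \<Rightarrow> real"
  assumes fc: "continuous_on UNIV f" and fs: "\<And>x. norm x > S \<Longrightarrow> f x = 0"
  shows "integrable lborel f"
proof -
  have "integrable lborel (\<lambda>x. indicator (cball 0 S) x *\<^sub>R f x)"
    by (rule borel_integrable_compact) (auto intro: continuous_on_subset[OF fc])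
  moreover have "(\<lambda>x. indicator (cball 0 S) x *\<^sub>R f x) = f"
    using fs by (force simp: indicator_def fun_eq_iff mem_cball dist_norm)
  ultimately show ?thesis by simp
qed

lemma partial_vanish:
  fixes h :: "real^3 \<Rightarrow> real"
  assumes hs: "\<And>x. norm x > S \<Longrightarrow> h x = 0" and z: "norm z > S"
  shows "partial i h z = 0"
proof -
  have "((\<lambda>_. 0::real) has_derivative (\<lambda>_. 0)) (at z)" by simp
  then have "(h has_derivative (\<lambda>_. 0)) (at z)"
    by (rule has_derivative_transform_within_open[where s="{x. S < norm x}"])
       (use z hs in \<open>auto intro: open_Collect_less continuous_intros\<close>)
  then have "(\<lambda>_. 0) = frechet_derivative h (at z)" by (rule frechet_derivative_at)
  then show ?thesis unfolding partial_def by (metis)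
qed

lemma partial_mult:
  fixes f g :: "real^3 \<Rightarrow> real"
  assumes "f differentiable (at y)" "g differentiable (at y)"
  shows "partial i (\<lambda>x. f x * g x) y = f y * partial i g y + partial i f y * g y"
proof -
  have df: "(f has_derivative frechet_derivative f (at y)) (at y)" using assms frechet_derivative_works by blast
  have dg: "(g has_derivative frechet_derivative g (at y)) (at y)" using assms frechet_derivative_works by blast
  have "((\<lambda>x. f x * g x) has_derivative
      (\<lambda>h. f y * frechet_derivative g (at y) h + frechet_derivative f (at y) h * g y)) (at y)"
    by (rule has_derivative_mult[OF df dg])
  then have "(\<lambda>h. f y * frechet_derivative g (at y) h + frechet_derivative f (at y) h * g y)
     = frechet_derivative (\<lambda>x. f x * g x) (at y)" by (rule frechet_derivative_at)
  then show ?thesis unfolding partial_def by (metis)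
qed

lemma int_partial_zero:
  fixes h :: "real^3 \<Rightarrow> real"
  assumes hd: "\<And>y. h differentiable (at y)" and hp: "\<And>i. continuous_on UNIV (partial i h)"
    and hs: "\<And>x. norm x > S \<Longrightarrow> h x = 0"
  shows "(LINT x|lborel. partial i h x) = 0"
proof -
  define R where "R = \<bar>S\<bar> + 2"
  have R: "R > 0" "R \<ge> S + 2" unfolding R_def by auto
  interpret kk: kop "indicator (cball 0 R)" uminus R
  proof
    show "indicator (cball 0 R) \<in> borel_measurable borel" by (intro borel_measurable_indicator borel_closed closed_cball)
    show "integrable lborel (indicator (cball (0::real^3) R) :: real^3 \<Rightarrow> real)"
      by (rule integrable_real_indicator) (simp, rule emeasure_compact_finite[OF compact_cball])
  qed (use R in \<open>auto simp: indicator_def mem_cball dist_norm intro: exI[of _ 1]\<close>)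
  let ?F = "opK (indicator (cball 0 R)) uminus h"
  have const: "?F y = (LINT x|lborel. h x)" if y: "norm y < 1" for y
  proof -
    have "?F y = (LINT z|lborel. h (y + z))"
      unfolding opK_def
    proof (rule Bochner_Integration.integral_cong[OF refl])
      fix z :: "real^3"
      show "indicator (cball 0 R) z * h (y - - z) = h (y + z)"
      proof (cases "norm z \<le> R")
        case True then show ?thesis by (simp add: indicator_def mem_cball dist_norm)
      next
        case False
        have "norm z \<le> norm (y + z) + norm y" using norm_triangle_sub[of z "y + z"] by (simp add: norm_minus_commute)
        then have "norm (y + z) > S" using False y R by linarith
        then show ?thesis using False hs by (simp add: indicator_def mem_cball dist_norm)
      qed
    qed
    also have "\<dots> = (LINT x|lborel. h x)"
    proof -
      have hm: "h \<in> borel_measurable borel"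
        using hd differentiable_imp_continuous_within continuous_at_imp_continuous_on
          borel_measurable_continuous_onI by blast
      have "(LINT x|lborel. h x) = (LINT x|distr lborel borel ((+) y). h x)"
        by (simp add: lborel_distr_plus)
      also have "\<dots> = (LINT z|lborel. h (y + z))"
        by (rule integral_distr) (use hm in auto)
      finally show ?thesis by simp
    qed
    finally show ?thesis .
  qed
  have "((\<lambda>_. LINT x|lborel. h x) has_derivative (\<lambda>_. 0)) (at 0)" by simp
  then have "(?F has_derivative (\<lambda>_. 0)) (at 0)"
    by (rule has_derivative_transform_within_open[where s="ball 0 1"]) (use const in auto)
  then have "(\<lambda>_. 0) = frechet_derivative ?F (at 0)" by (rule frechet_derivative_at)
  then have "partial i ?F 0 = 0" unfolding partial_def by metis
  moreover have "partial i ?F 0 = opK (indicator (cball 0 R)) uminus (partial i h) 0"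
    by (rule kk.partial_op[OF hd hp])
  moreover have "opK (indicator (cball 0 R)) uminus (partial i h) 0 = (LINT x|lborel. partial i h x)"
    unfolding opK_def
  proof (rule Bochner_Integration.integral_cong[OF refl])
    fix z :: "real^3"
    show "indicator (cball 0 R) z * partial i h (0 - - z) = partial i h z"
    proof (cases "norm z \<le> R")
      case True then show ?thesis by (simp add: indicator_def mem_cball dist_norm)
    next
      case False
      then have "norm z > S" using R by linarith
      then show ?thesis using False partial_vanish[OF hs] by (simp add: indicator_def mem_cball dist_norm)
    qed
  qed
  ultimately show ?thesis by simp
qed




lemma diff_cont: "(\<And>y. f differentiable (at y)) \<Longrightarrow> continuous_on UNIV f"
  using differentiable_imp_continuous_within continuous_at_imp_continuous_on by blast

lemma ibp:
  fixes f g :: "real^3 \<Rightarrow> real"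
  assumes fd: "\<And>y. f differentiable (at y)" and fp: "\<And>i. continuous_on UNIV (partial i f)"
    and fs: "\<And>x. norm x > S \<Longrightarrow> f x = 0"
    and gd: "\<And>y. g differentiable (at y)" and gp: "\<And>i. continuous_on UNIV (partial i g)"
  shows "(LINT x|lborel. partial i f x * g x) = - (LINT x|lborel. f x * partial i g x)"
proof -
  let ?h = "\<lambda>x. f x * g x"
  have hd: "?h differentiable (at y)" for y using fd gd by simp
  have hpe: "partial j ?h = (\<lambda>x. f x * partial j g x + partial j f x * g x)" for j
    using partial_mult[OF fd gd] by blast
  have fc: "continuous_on UNIV f" and gc: "continuous_on UNIV g" using diff_cont fd gd by auto
  have hp: "continuous_on UNIV (partial j ?h)" for j
    unfolding hpe by (intro continuous_intros fc gc fp gp)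
  have hs: "?h x = 0" if "norm x > S" for x using fs that by simp
  have z: "(LINT x|lborel. partial i ?h x) = 0" by (rule int_partial_zero[OF hd hp hs])
  have i1: "integrable lborel (\<lambda>x. f x * partial i g x)"
    by (rule integrable_cs[where S=S]) (auto intro!: continuous_intros fc gp simp: fs)
  have i2: "integrable lborel (\<lambda>x. partial i f x * g x)"
    by (rule integrable_cs[where S=S]) (auto intro!: continuous_intros gc fp simp: partial_vanish[OF fs])
  have "0 = (LINT x|lborel. f x * partial i g x + partial i f x * g x)" using z hpe by simp
  also have "\<dots> = (LINT x|lborel. f x * partial i g x) + (LINT x|lborel. partial i f x * g x)"
    by (rule Bochner_Integration.integral_add[OF i1 i2])
  finally show ?thesis by linarith
qed

lemma cont_meas_pair:
  fixes f :: "(real^3) \<times> (real^3) \<Rightarrow> real"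
  assumes "continuous_on UNIV f"
  shows "f \<in> borel_measurable (lborel \<Otimes>\<^sub>M lborel)"
  unfolding lborel_prod using assms by (simp add: borel_measurable_continuous_onI)

context kop begin

lemma Kmeas_pair: "(\<lambda>p. K (snd p)) \<in> borel_measurable (lborel \<Otimes>\<^sub>M lborel)"
  by (rule measurable_compose[OF measurable_snd]) simp

lemma prod_int:
  fixes F :: "(real^3) \<times> (real^3) \<Rightarrow> real"
  assumes Fm: "F \<in> borel_measurable (lborel \<Otimes>\<^sub>M lborel)"
    and Fb: "\<And>x z. \<bar>F (x, z)\<bar> \<le> C * indicator (cball 0 S) x * \<bar>K z\<bar>"
  shows "integrable (lborel \<Otimes>\<^sub>M lborel) F"
proof (rule Bochner_Integration.integrable_bound[OF _ Fm])
  let ?G = "\<lambda>p::(real^3) \<times> (real^3). C * indicator (cball 0 S) (fst p) * \<bar>K (snd p)\<bar>"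
  have ind: "integrable lborel (indicator (cball (0::real^3) S) :: real^3 \<Rightarrow> real)"
    by (rule integrable_real_indicator) (simp, rule emeasure_compact_finite[OF compact_cball])
  have im: "(\<lambda>p::(real^3) \<times> (real^3). indicator (cball 0 S) (fst p) :: real) \<in> borel_measurable (lborel \<Otimes>\<^sub>M lborel)"
    by (rule measurable_compose[OF measurable_fst]) (simp add: borel_measurable_indicator borel_closed)
  show "integrable (lborel \<Otimes>\<^sub>M lborel) ?G"
  proof (rule lborel_pair.Fubini_integrable)
    show "?G \<in> borel_measurable (lborel \<Otimes>\<^sub>M lborel)"
      using im Kmeas_pair by (intro borel_measurable_times borel_measurable_abs borel_measurable_const) auto
    have "(\<lambda>x. \<integral>z. norm (?G (x, z)) \<partial>lborel) = (\<lambda>x. (\<bar>C\<bar> * NK) * indicator (cball 0 S) x)"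
      by (auto simp: NK_def abs_mult indicator_def fun_eq_iff)
    then show "integrable lborel (\<lambda>x. \<integral>z. norm (?G (x, z)) \<partial>lborel)"
      using ind by simp
    show "AE x in lborel. integrable lborel (\<lambda>z. ?G (x, z))"
      using Kint by auto
  qed
  show "AE p in lborel \<Otimes>\<^sub>M lborel. norm (F p) \<le> norm (?G p)"
  proof (rule AE_I2)
    fix p :: "(real^3) \<times> (real^3)"
    obtain x z where p: "p = (x, z)" by (cases p)
    have "\<bar>F (x, z)\<bar> \<le> C * indicator (cball 0 S) x * \<bar>K z\<bar>" by (rule Fb)
    also have "\<dots> \<le> \<bar>C * indicator (cball 0 S) x * \<bar>K z\<bar>\<bar>" by simp
    finally show "norm (F p) \<le> norm (?G p)" using p by simp
  qed
qed

end



lemma global_bound: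
  fixes f :: "real^3 \<Rightarrow> real"
  assumes fc: "continuous_on UNIV f" and fs: "\<And>x. norm x > S \<Longrightarrow> f x = 0"
  shows "\<exists>M. \<forall>y. \<bar>f y\<bar> \<le> M"
proof -
  have "\<exists>M. \<forall>y\<in>cball 0 S. \<bar>f y\<bar> \<le> M"
    by (rule cont_bound_compact[OF continuous_on_subset[OF fc] compact_cball]) simp
  then obtain M where M: "\<forall>y\<in>cball 0 S. \<bar>f y\<bar> \<le> M" by blast
  show ?thesis
  proof (intro exI[of _ "\<bar>M\<bar>"] allI)
    fix y show "\<bar>f y\<bar> \<le> \<bar>M\<bar>"
    proof (cases "norm y > S")
      case True then show ?thesis using fs by simp
    next
      case False
      then have "y \<in> cball 0 S" by (simp add: mem_cball dist_norm)
      then have "\<bar>f y\<bar> \<le> M" using M by blast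
      then show ?thesis by simp
    qed
  qed
qed

lemma lborel_distr_uminus3: "distr lborel borel uminus = (lborel :: (real^3) measure)"
proof -
  have "(\<lambda>x::real^3. 0 + (-1::real) *\<^sub>R x) = uminus" by auto
  then show ?thesis using lborel_affine[of "-1::real" "0::real^3"] by (simp add: density_1)
qed

context kop begin

lemma selfadj:
  fixes a b :: "real^3 \<Rightarrow> real"
  assumes Ksym: "\<And>z. K (-z) = K z"
    and ac: "continuous_on UNIV a" and bc: "continuous_on UNIV b"
    and as: "\<And>x. norm x > Sa \<Longrightarrow> a x = 0" and bs: "\<And>x. norm x > Sb \<Longrightarrow> b x = 0"
  shows "(LINT x|lborel. opK K L a x * b x) = (LINT x|lborel. a x * opK K L b x)"
proof -
  obtain Ma where Ma: "\<And>y. \<bar>a y\<bar> \<le> Ma" using global_bound[OF ac as] by blast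
  obtain Mb where Mb: "\<And>y. \<bar>b y\<bar> \<le> Mb" using global_bound[OF bc bs] by blast
  have Lm: "L (- z) = - L z" for z using linear_neg[OF bounded_linear.linear[OF Llin]] by blast
  have am: "a \<in> borel_measurable borel" "b \<in> borel_measurable borel"
    using ac bc borel_measurable_continuous_onI by auto
  have F1m: "(\<lambda>p. K (snd p) * (a (fst p - L (snd p)) * b (fst p))) \<in> borel_measurable (lborel \<Otimes>\<^sub>M lborel)"
    by (intro borel_measurable_times Kmeas_pair cont_meas_pair continuous_intros
          continuous_on_compose2[OF ac] continuous_on_compose2[OF bc] continuous_on_compose2[OF Lcont]) auto
  have F1i: "integrable (lborel \<Otimes>\<^sub>M lborel) (\<lambda>(x, z). K z * (a (x - L z) * b x))"
  proof (rule prod_int[where C="Ma * Mb" and S=Sb])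
    show "(\<lambda>(x, z). K z * (a (x - L z) * b x)) \<in> borel_measurable (lborel \<Otimes>\<^sub>M lborel)"
      using F1m by (simp add: case_prod_beta')
    fix x z :: "real^3"
    show "\<bar>(\<lambda>(x, z). K z * (a (x - L z) * b x)) (x, z)\<bar> \<le> Ma * Mb * indicator (cball 0 Sb) x * \<bar>K z\<bar>"
    proof (cases "norm x > Sb")
      case True then show ?thesis using bs by simp
    next
      case False
      have "\<bar>a (x - L z) * b x\<bar> \<le> Ma * Mb" unfolding abs_mult
        using Ma Mb by (intro mult_mono) (auto intro: order_trans[OF abs_ge_zero])
      then have "\<bar>K z\<bar> * \<bar>a (x - L z) * b x\<bar> \<le> \<bar>K z\<bar> * (Ma * Mb)" by (intro mult_left_mono) auto
      then show ?thesis using False by (simp add: indicator_def mem_cball dist_norm abs_mult mult_ac)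
    qed
  qed
  have F2m: "(\<lambda>p. K (snd p) * (a (fst p) * b (L (snd p) + fst p))) \<in> borel_measurable (lborel \<Otimes>\<^sub>M lborel)"
    by (intro borel_measurable_times Kmeas_pair cont_meas_pair continuous_intros
          continuous_on_compose2[OF ac] continuous_on_compose2[OF bc] continuous_on_compose2[OF Lcont]) auto
  have F2i: "integrable (lborel \<Otimes>\<^sub>M lborel) (\<lambda>(y, z). K z * (a y * b (L z + y)))"
  proof (rule prod_int[where C="Ma * Mb" and S=Sa])
    show "(\<lambda>(y, z). K z * (a y * b (L z + y))) \<in> borel_measurable (lborel \<Otimes>\<^sub>M lborel)"
      using F2m by (simp add: case_prod_beta')
    fix x z :: "real^3"
    show "\<bar>(\<lambda>(y, z). K z * (a y * b (L z + y))) (x, z)\<bar> \<le> Ma * Mb * indicator (cball 0 Sa) x * \<bar>K z\<bar>"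
    proof (cases "norm x > Sa")
      case True then show ?thesis using as by simp
    next
      case False
      have "\<bar>a x * b (L z + x)\<bar> \<le> Ma * Mb" unfolding abs_mult
        using Ma Mb by (intro mult_mono) (auto intro: order_trans[OF abs_ge_zero])
      then have "\<bar>K z\<bar> * \<bar>a x * b (L z + x)\<bar> \<le> \<bar>K z\<bar> * (Ma * Mb)" by (intro mult_left_mono) auto
      then show ?thesis using False by (simp add: indicator_def mem_cball dist_norm abs_mult mult_ac)
    qed
  qed
  have "(LINT x|lborel. opK K L a x * b x) = (LINT x|lborel. LINT z|lborel. K z * (a (x - L z) * b x))"
    unfolding opK_def
  proof (rule Bochner_Integration.integral_cong[OF refl])
    fix x :: "real^3"
    have "(LINT z|lborel. K z * a (x - L z)) * b x = (LINT z|lborel. K z * a (x - L z) * b x)"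
      by (rule integral_mult_left_zero[symmetric])
    then show "(LINT z|lborel. K z * a (x - L z)) * b x = (LINT z|lborel. K z * (a (x - L z) * b x))"
      by (simp add: mult.assoc)
  qed
  also have "\<dots> = (LINT z|lborel. LINT x|lborel. K z * (a (x - L z) * b x))"
    using lborel_pair.Fubini_integral[OF F1i] by simp
  also have "\<dots> = (LINT z|lborel. LINT y|lborel. K z * (a y * b (L z + y)))"
  proof (rule Bochner_Integration.integral_cong[OF refl])
    fix z :: "real^3"
    have "(LINT x|lborel. K z * (a (x - L z) * b x)) = (LINT x|distr lborel borel ((+) (L z)). K z * (a (x - L z) * b x))"
      by (simp add: lborel_distr_plus)
    also have "\<dots> = (LINT y|lborel. K z * (a (L z + y - L z) * b (L z + y)))"
      by (rule integral_distr) (use am in auto)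
    finally show "(LINT x|lborel. K z * (a (x - L z) * b x)) = (LINT y|lborel. K z * (a y * b (L z + y)))"
      by simp
  qed
  also have "\<dots> = (LINT y|lborel. LINT z|lborel. K z * (a y * b (L z + y)))"
    using lborel_pair.Fubini_integral[OF F2i] by simp
  also have "\<dots> = (LINT y|lborel. a y * opK K L b y)"
  proof (rule Bochner_Integration.integral_cong[OF refl])
    fix y :: "real^3"
    have "(LINT z|lborel. K z * (a y * b (L z + y))) = (LINT z|distr lborel borel uminus. K z * (a y * b (L z + y)))"
      by (simp add: lborel_distr_uminus3)
    also have "\<dots> = (LINT z|lborel. K (- z) * (a y * b (L (- z) + y)))"
    proof (rule integral_distr)
      have "continuous_on UNIV (\<lambda>z. b (L z + y))"
        by (intro continuous_on_compose2[OF bc] continuous_intros Lcont) auto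
      then have "(\<lambda>z. b (L z + y)) \<in> borel_measurable borel" by (rule borel_measurable_continuous_onI)
      then show "(\<lambda>z. K z * (a y * b (L z + y))) \<in> borel_measurable borel" by simp
    qed simp
    also have "\<dots> = (LINT z|lborel. a y * (K z * b (y - L z)))"
      by (simp add: Ksym Lm mult_ac)
    also have "\<dots> = a y * opK K L b y" unfolding opK_def by simp
    finally show "(LINT z|lborel. K z * (a y * b (L z + y))) = a y * opK K L b y" .
  qed
  finally show ?thesis .
qed

end



locale rk =
  fixes rho :: "real \<Rightarrow> real"
  assumes nonneg: "\<And>r. r > 0 \<Longrightarrow> rho r \<ge> 0"
    and vanish: "\<And>t. t > 1 \<Longrightarrow> rho t = 0"
    and cont: "continuous_on {0<..} rho"
    and rint: "integrable lborel (\<lambda>z::real^3. rho (norm z))"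
begin

definition rp :: "real \<Rightarrow> real" where "rp t = indicator {0<..} t *\<^sub>R rho t"
definition q :: "real \<Rightarrow> real" where "q t = rp t / t"

lemma rp_meas[measurable]: "rp \<in> borel_measurable borel"
  unfolding rp_def[abs_def] by (rule borel_measurable_continuous_on_indicator) (auto intro: cont)

lemma q_meas[measurable]: "q \<in> borel_measurable borel"
  unfolding q_def[abs_def] by measurable

lemma rp_nonneg: "rp t \<ge> 0" unfolding rp_def using nonneg by (auto simp: indicator_def)

lemma q_nonneg: "t \<ge> 0 \<Longrightarrow> q t \<ge> 0" unfolding q_def using rp_nonneg by simp

lemma Q_eq: "Qrho rho z = (LINT t|lborel. (if norm z \<le> t then q t else 0))"
  unfolding Qrho_def set_lebesgue_integral_def
proof (rule Bochner_Integration.integral_cong[OF refl])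
  fix t :: real
  show "indicator {norm z..} t *\<^sub>R (rho t / t) = (if norm z \<le> t then q t else 0)"
  proof (cases "norm z \<le> t")
    case True
    then have "t \<ge> 0" using norm_ge_zero order_trans by blast
    then show ?thesis using True by (cases "t = 0") (auto simp: q_def rp_def indicator_def)
  qed (simp add: indicator_def)
qed

lemma Q_meas[measurable]: "Qrho rho \<in> borel_measurable borel"
proof -
  have "(\<lambda>z::real^3. LINT t|lborel. (if norm z \<le> t then q t else 0)) \<in> borel_measurable borel"
    by (rule lborel.borel_measurable_lebesgue_integral) measurable
  moreover have "Qrho rho = (\<lambda>z::real^3. LINT t|lborel. (if norm z \<le> t then q t else 0))"
    by (rule ext) (rule Q_eq)
  ultimately show ?thesis by simp
qed

lemma Q_nonneg: "Qrho rho z \<ge> 0"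
  unfolding Q_eq by (rule Bochner_Integration.integral_nonneg) (auto intro: q_nonneg order_trans[OF norm_ge_zero])

lemma Q_vanish: "norm z > 1 \<Longrightarrow> Qrho rho z = 0"
  unfolding Q_eq
proof -
  assume z: "norm z > 1"
  have "(\<lambda>t. if norm z \<le> t then q t else 0) = (\<lambda>t. 0)"
    using z vanish by (auto simp: fun_eq_iff q_def rp_def)
  then show "(LINT t|lborel. (if norm z \<le> t then q t else 0)) = 0" by simp
qed

lemma Q_sym: "Qrho rho (- z) = Qrho rho z"
  unfolding Qrho_def by simp

end



lemma ennreal_int_le:
  fixes f :: "'a \<Rightarrow> real"
  assumes "\<And>x. f x \<ge> 0"
  shows "ennreal (integral\<^sup>L M f) \<le> (\<integral>\<^sup>+x. ennreal (f x) \<partial>M)"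
proof (cases "integrable M f")
  case True
  then show ?thesis using nn_integral_eq_integral[OF True] assms by simp
next
  case False
  then show ?thesis using not_integrable_integral_eq[OF False] by simp
qed

lemma nn_scale3:
  fixes g :: "real^3 \<Rightarrow> ennreal" and c :: real
  assumes c: "c > 0" and g[measurable]: "g \<in> borel_measurable borel"
  shows "(\<integral>\<^sup>+z. g (c *\<^sub>R z) \<partial>lborel) = ennreal (1 / c^3) * (\<integral>\<^sup>+w. g w \<partial>lborel)"
proof -
  have "(\<integral>\<^sup>+w. g w \<partial>lborel) = ennreal (c^3) * (\<integral>\<^sup>+z. g (c *\<^sub>R z) \<partial>lborel)"
    by (subst lborel_affine[of c 0]) (use c in \<open>simp_all add: nn_integral_density nn_integral_distr nn_integral_cmult\<close>)
  then have "ennreal (1 / c^3) * (\<integral>\<^sup>+w. g w \<partial>lborel) = ennreal (1 / c^3) * ennreal (c^3) * (\<integral>\<^sup>+z. g (c *\<^sub>R z) \<partial>lborel)"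
    by (simp add: mult.assoc)
  also have "ennreal (1 / c^3) * ennreal (c^3) = 1"
    using c by (simp add: ennreal_mult[symmetric])
  finally show ?thesis by simp
qed

lemma inv4_int: "(\<integral>\<^sup>+s. ennreal (1 / s^4) * indicator {1..} s \<partial>lborel) = ennreal (1/3)"
proof -
  have "((\<lambda>x::real. 1 / x ^ 4) has_integral 1 / (real (4 - 1) * 1 ^ (4 - 1))) {1..}"
    by (rule has_integral_inverse_power_to_inf) auto
  then have "((\<lambda>x::real. 1 / x ^ 4) has_integral 1/3) {1..}" by simp
  from nn_integral_has_integral_lebesgue'[OF _ this] show ?thesis by simp
qed




context rk begin

lemma I_fin: "(\<integral>\<^sup>+w. ennreal (rp (norm (w::real^3))) \<partial>lborel) < \<infinity>"
proof -
  have "(\<integral>\<^sup>+w. ennreal (rp (norm (w::real^3))) \<partial>lborel) \<le> (\<integral>\<^sup>+w. ennreal (norm (rho (norm (w::real^3)))) \<partial>lborel)"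
  proof (rule nn_integral_mono)
    fix w :: "real^3"
    have "rp (norm w) \<le> norm (rho (norm w))" unfolding rp_def by (auto simp: indicator_def)
    then show "ennreal (rp (norm w)) \<le> ennreal (norm (rho (norm w)))" by (rule ennreal_leI)
  qed
  also have "\<dots> < \<infinity>" using rint unfolding integrable_iff_bounded by blast
  finally show ?thesis .
qed

lemma inner_scale:
  fixes z :: "real^3"
  assumes z: "z \<noteq> 0"
  shows "(\<integral>\<^sup>+t. ennreal (if norm z \<le> t then q t else 0) \<partial>lborel)
       = (\<integral>\<^sup>+s. ennreal (if 1 \<le> s then rp (s * norm z) / s else 0) \<partial>lborel)"
proof -
  define r where "r = norm z"
  have r: "r > 0" using z r_def by simp
  have "(\<integral>\<^sup>+t. ennreal (if r \<le> t then q t else 0) \<partial>lborel)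
      = ennreal \<bar>r\<bar> * (\<integral>\<^sup>+s. ennreal (if r \<le> 0 + r * s then q (0 + r * s) else 0) \<partial>lborel)"
    by (rule nn_integral_real_affine) (use r in auto)
  also have "\<dots> = (\<integral>\<^sup>+s. ennreal r * ennreal (if r \<le> 0 + r * s then q (0 + r * s) else 0) \<partial>lborel)"
    using r by (subst nn_integral_cmult) auto
  also have "\<dots> = (\<integral>\<^sup>+s. ennreal (if 1 \<le> s then rp (s * r) / s else 0) \<partial>lborel)"
  proof (rule nn_integral_cong)
    fix s :: real
    show "ennreal r * ennreal (if r \<le> 0 + r * s then q (0 + r * s) else 0) = ennreal (if 1 \<le> s then rp (s * r) / s else 0)"
    proof (cases "1 \<le> s")
      case True
      then have "r \<le> r * s" using r by simp
      moreover have "r * q (r * s) = rp (s * r) / s"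
        using r True by (simp add: q_def mult.commute)
      ultimately show ?thesis using True r q_nonneg[of "r * s"]
        by (simp add: ennreal_mult[symmetric])
    next
      case False
      then have "\<not> r \<le> r * s" using r by simp
      then show ?thesis using False by simp
    qed
  qed
  finally show ?thesis unfolding r_def .
qed

lemma Q_int: "integrable lborel (Qrho rho)"
proof (rule integrableI_nonneg)
  show "Qrho rho \<in> borel_measurable lborel" by simp
  show "AE z in lborel. 0 \<le> Qrho rho z" using Q_nonneg by simp
  define G where "G z s = ennreal (if 1 \<le> s then rp (s * norm z) / s else 0)" for z :: "real^3" and s :: real
  define I where "I = (\<integral>\<^sup>+w. ennreal (rp (norm (w::real^3))) \<partial>lborel)"
  have Gm: "case_prod G \<in> borel_measurable (lborel \<Otimes>\<^sub>M lborel)"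
    unfolding G_def[abs_def] by measurable
  have "(\<integral>\<^sup>+z. ennreal (Qrho rho z) \<partial>lborel) \<le> (\<integral>\<^sup>+z. (\<integral>\<^sup>+s. G z s \<partial>lborel) \<partial>lborel)"
  proof (rule nn_integral_mono_AE)
    show "AE z in lborel. ennreal (Qrho rho z) \<le> (\<integral>\<^sup>+s. G z s \<partial>lborel)"
      using AE_lborel_singleton[of "0::real^3"]
    proof (rule AE_mp, intro AE_I2 impI)
      fix z :: "real^3" assume z: "z \<noteq> 0"
      have "ennreal (Qrho rho z) \<le> (\<integral>\<^sup>+t. ennreal (if norm z \<le> t then q t else 0) \<partial>lborel)"
        unfolding Q_eq by (rule ennreal_int_le) (auto intro: q_nonneg order_trans[OF norm_ge_zero])
      also have "\<dots> = (\<integral>\<^sup>+s. G z s \<partial>lborel)" unfolding G_def by (rule inner_scale[OF z])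
      finally show "ennreal (Qrho rho z) \<le> (\<integral>\<^sup>+s. G z s \<partial>lborel)" .
    qed
  qed
  also have "\<dots> = (\<integral>\<^sup>+s. (\<integral>\<^sup>+z. G z s \<partial>lborel) \<partial>lborel)"
    by (rule lborel_pair.Fubini'[symmetric, OF Gm])
  also have "\<dots> = (\<integral>\<^sup>+s. ennreal (1 / s^4) * indicator {1..} s * I \<partial>lborel)"
  proof (rule nn_integral_cong)
    fix s :: real
    show "(\<integral>\<^sup>+z. G z s \<partial>lborel) = ennreal (1 / s^4) * indicator {1..} s * I"
    proof (cases "1 \<le> s")
      case True
      then have s: "s > 0" by simp
      have "(\<integral>\<^sup>+z. G z s \<partial>lborel) = (\<integral>\<^sup>+z. ennreal (1 / s) * ennreal (rp (norm (s *\<^sub>R (z::real^3)))) \<partial>lborel)"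
        unfolding G_def
        by (intro nn_integral_cong) (use True s rp_nonneg in \<open>simp add: ennreal_mult[symmetric] abs_of_pos\<close>)
      also have "\<dots> = ennreal (1 / s) * (\<integral>\<^sup>+z. ennreal (rp (norm (s *\<^sub>R (z::real^3)))) \<partial>lborel)"
        by (subst nn_integral_cmult) auto
      also have "(\<integral>\<^sup>+z. ennreal (rp (norm (s *\<^sub>R (z::real^3)))) \<partial>lborel) = ennreal (1 / s^3) * I"
        unfolding I_def by (rule nn_scale3[OF s, of "\<lambda>w. ennreal (rp (norm w))"]) measurable
      also have "ennreal (1 / s) * (ennreal (1 / s^3) * I) = ennreal (1 / s^4) * I"
        using s by (simp add: mult.assoc[symmetric] ennreal_mult[symmetric] power_eq_if)
      finally show ?thesis using True by simp
    next
      case False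
      then show ?thesis by (simp add: G_def)
    qed
  qed
  also have "\<dots> = (\<integral>\<^sup>+s. ennreal (1 / s^4) * indicator {1..} s \<partial>lborel) * I"
    by (rule nn_integral_multc) measurable
  also have "\<dots> = ennreal (1/3) * I" by (simp add: inv4_int)
  also have "\<dots> < \<infinity>" using I_fin unfolding I_def by (simp add: ennreal_mult_less_top)
  finally show "(\<integral>\<^sup>+z. ennreal (Qrho rho z) \<partial>lborel) < \<infinity>" .
qed

end



lemma cs_bound:
  fixes f :: "real^3 \<Rightarrow> 'b::real_normed_vector"
  assumes "compact_support f"
  shows "\<exists>S. \<forall>x. norm x > S \<longrightarrow> f x = 0"
proof -
  have "bounded (closure {x. f x \<noteq> 0})" using assms compact_imp_bounded unfolding compact_support_def by blast
  then obtain S where S: "\<forall>x\<in>closure {x. f x \<noteq> 0}. norm x \<le> S" unfolding bounded_iff by blast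
  show ?thesis
  proof (intro exI[of _ S] allI impI)
    fix x :: "real^3" assume "norm x > S"
    then show "f x = 0" using S closure_subset by force
  qed
qed

context kop begin

lemma main_generic:
  assumes Ksym: "\<And>z. K (-z) = K z"
  shows "(\<forall>\<phi>. smooth3 \<phi> \<longrightarrow> smooth3 (opK K L \<phi>))
    \<and> (\<forall>\<phi>. smooth3 \<phi> \<longrightarrow> (\<forall>x. grad3 (opK K L \<phi>) x = (\<chi> i. opK K L (\<lambda>y. grad3 \<phi> y $ i) x)))
    \<and> (\<forall>\<psi>. smooth3_field \<psi> \<longrightarrow> (\<forall>x. div3 (\<lambda>x. \<chi> i. opK K L (\<lambda>y. \<psi> y $ i) x) x = opK K L (div3 \<psi>) x))
    \<and> (\<forall>\<phi> \<psi>. smooth3 \<phi> \<and> compact_support \<phi> \<and> smooth3_field \<psi> \<and> compact_support \<psi> \<longrightarrow>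
         (LINT x|lborel. grad3 (opK K L \<phi>) x \<bullet> \<psi> x)
           = - (LINT x|lborel. \<phi> x * div3 (\<lambda>x. \<chi> i. opK K L (\<lambda>y. \<psi> y $ i) x) x))"
proof (intro conjI allI impI)
  fix \<phi> assume "smooth3 \<phi>"
  then show "smooth3 (opK K L \<phi>)" unfolding smooth3_def using Ck_op by blast
next
  fix \<phi> x assume s: "smooth3 \<phi>"
  show "grad3 (opK K L \<phi>) x = (\<chi> i. opK K L (\<lambda>y. grad3 \<phi> y $ i) x)"
    unfolding grad3_def using partial_op_fun[OF smooth3_C1[OF s]] by simp
next
  fix \<psi> :: "real^3 \<Rightarrow> real^3" and x assume s: "smooth3_field \<psi>"
  have C1: "Ck (Suc 0) (\<lambda>y. \<psi> y $ i)" for i using s smooth3_C1 unfolding smooth3_field_def by blast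
  have pc: "continuous_on UNIV (partial i (\<lambda>y. \<psi> y $ i))" for i using Ck_pcont[OF C1] by blast
  have "div3 (\<lambda>x. \<chi> i. opK K L (\<lambda>y. \<psi> y $ i) x) x = (\<Sum>i\<in>UNIV. partial i (opK K L (\<lambda>y. \<psi> y $ i)) x)"
    unfolding div3_def by simp
  also have "\<dots> = (\<Sum>i\<in>UNIV. opK K L (partial i (\<lambda>y. \<psi> y $ i)) x)"
    using partial_op_fun[OF C1] by simp
  also have "\<dots> = (\<Sum>i\<in>UNIV. LINT z|lborel. K z * partial i (\<lambda>y. \<psi> y $ i) (x - L z))"
    unfolding opK_def ..
  also have "\<dots> = (LINT z|lborel. (\<Sum>i\<in>UNIV. K z * partial i (\<lambda>y. \<psi> y $ i) (x - L z)))"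
    by (rule Bochner_Integration.integral_sum[symmetric]) (use int_op[OF pc] in auto)
  also have "\<dots> = opK K L (div3 \<psi>) x"
    unfolding opK_def div3_def by (simp add: sum_distrib_left)
  finally show "div3 (\<lambda>x. \<chi> i. opK K L (\<lambda>y. \<psi> y $ i) x) x = opK K L (div3 \<psi>) x" .
next
  fix \<phi> :: "real^3 \<Rightarrow> real" and \<psi> :: "real^3 \<Rightarrow> real^3"
  assume as: "smooth3 \<phi> \<and> compact_support \<phi> \<and> smooth3_field \<psi> \<and> compact_support \<psi>"
  then have sp: "smooth3 \<phi>" and sps: "smooth3_field \<psi>" by auto
  obtain S1 where S1: "\<And>x. norm x > S1 \<Longrightarrow> \<phi> x = 0" using cs_bound as by blast
  obtain S2 where S2': "\<And>x. norm x > S2 \<Longrightarrow> \<psi> x = 0" using cs_bound as by blast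
  have S2: "\<psi> x $ i = 0" if "norm x > S2" for x i using S2'[OF that] by simp
  have C1p: "Ck (Suc 0) \<phi>" using sp smooth3_C1 by blast
  have C1: "Ck (Suc 0) (\<lambda>y. \<psi> y $ i)" for i using sps smooth3_C1 unfolding smooth3_field_def by blast
  have C1o: "Ck (Suc 0) (opK K L (\<lambda>y. \<psi> y $ i))" for i using Ck_op[OF C1] .
  have pcp: "continuous_on UNIV (partial i \<phi>)" for i using Ck_pcont[OF C1p] by blast
  have pc: "continuous_on UNIV (partial i (\<lambda>y. \<psi> y $ i))" for i using Ck_pcont[OF C1] by blast
  have cp: "continuous_on UNIV \<phi>" using Ck_cont[OF C1p] .
  have cps: "continuous_on UNIV (\<lambda>y. \<psi> y $ i)" for i using Ck_cont[OF C1] .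
  have each: "(LINT x|lborel. opK K L (partial i \<phi>) x * \<psi> x $ i)
      = - (LINT x|lborel. \<phi> x * opK K L (partial i (\<lambda>y. \<psi> y $ i)) x)" for i
  proof -
    have "(LINT x|lborel. opK K L (partial i \<phi>) x * \<psi> x $ i)
        = (LINT x|lborel. partial i \<phi> x * opK K L (\<lambda>y. \<psi> y $ i) x)"
      by (rule selfadj[OF Ksym pcp cps partial_vanish[OF S1] S2])
    also have "\<dots> = - (LINT x|lborel. \<phi> x * partial i (opK K L (\<lambda>y. \<psi> y $ i)) x)"
      by (rule ibp[OF Ck_diff[OF C1p] Ck_pcont[OF C1p] S1 Ck_diff[OF C1o] Ck_pcont[OF C1o]])
    also have "\<dots> = - (LINT x|lborel. \<phi> x * opK K L (partial i (\<lambda>y. \<psi> y $ i)) x)"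
      using partial_op_fun[OF C1] by simp
    finally show ?thesis .
  qed
  have i1: "integrable lborel (\<lambda>x. opK K L (partial i \<phi>) x * \<psi> x $ i)" for i
    by (rule integrable_cs[where S=S2]) (auto intro!: continuous_intros op_cont pcp cps simp: S2)
  have i2: "integrable lborel (\<lambda>x. \<phi> x * opK K L (partial i (\<lambda>y. \<psi> y $ i)) x)" for i
    by (rule integrable_cs[where S=S1]) (auto intro!: continuous_intros op_cont pc cp simp: S1)
  have "(LINT x|lborel. grad3 (opK K L \<phi>) x \<bullet> \<psi> x)
      = (LINT x|lborel. (\<Sum>i\<in>UNIV. opK K L (partial i \<phi>) x * \<psi> x $ i))"
    unfolding grad3_def inner_vec_def using partial_op_fun[OF C1p] by simp
  also have "\<dots> = (\<Sum>i\<in>UNIV. LINT x|lborel. opK K L (partial i \<phi>) x * \<psi> x $ i)"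
    by (rule Bochner_Integration.integral_sum) (use i1 in auto)
  also have "\<dots> = (\<Sum>i\<in>UNIV. - (LINT x|lborel. \<phi> x * opK K L (partial i (\<lambda>y. \<psi> y $ i)) x))"
    using each by simp
  also have "\<dots> = - (LINT x|lborel. (\<Sum>i\<in>UNIV. \<phi> x * opK K L (partial i (\<lambda>y. \<psi> y $ i)) x))"
    by (subst Bochner_Integration.integral_sum) (use i2 in \<open>auto simp: sum_negf\<close>)
  also have "\<dots> = - (LINT x|lborel. \<phi> x * div3 (\<lambda>x. \<chi> i. opK K L (\<lambda>y. \<psi> y $ i) x) x)"
    unfolding div3_def using partial_op_fun[OF C1] by (simp add: sum_distrib_left)
  finally show "(LINT x|lborel. grad3 (opK K L \<phi>) x \<bullet> \<psi> x)
      = - (LINT x|lborel. \<phi> x * div3 (\<lambda>x. \<chi> i. opK K L (\<lambda>y. \<psi> y $ i) x) x)" .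
qed

end



lemma hyps_rk:
  assumes hyps: "kernel_hyps rhorad \<eta>0 \<nu> \<sigma> \<gamma>"
  shows "rk rhorad"
proof -
  note h = hyps[unfolded kernel_hyps_def]
  have nn: "\<forall>r>0. rhorad r \<ge> 0" using h by (elim conjE) assumption
  have cl: "closure {z::real^3. z \<noteq> 0 \<and> rhorad (norm z) \<noteq> 0} = cball 0 1" using h by (elim conjE) assumption
  have ri: "integrable lborel (\<lambda>z::real^3. rhorad (norm z))" using h by (elim conjE) assumption
  have H2: "\<forall>k. \<forall>r>0. (((deriv ^^ k) (\<lambda>t. t * rhorad t)) has_real_derivative
                   ((deriv ^^ Suc k) (\<lambda>t. t * rhorad t)) r) (at r)" using h by (elim conjE) assumption
  show ?thesis
  proof
    show "\<And>r. r > 0 \<Longrightarrow> rhorad r \<ge> 0" using nn by blast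
    show "integrable lborel (\<lambda>z::real^3. rhorad (norm z))" by (rule ri)
  next
    fix t :: real assume t: "t > 1"
    show "rhorad t = 0"
    proof (rule ccontr)
      assume ne: "rhorad t \<noteq> 0"
      define z :: "real^3" where "z = t *\<^sub>R axis 1 1"
      have nz: "norm z = t" using t by (simp add: z_def)
      then have "z \<in> {z::real^3. z \<noteq> 0 \<and> rhorad (norm z) \<noteq> 0}" using ne t by auto
      then have "z \<in> closure {z::real^3. z \<noteq> 0 \<and> rhorad (norm z) \<noteq> 0}"
        by (rule closure_subset[THEN subsetD])
      then have "z \<in> cball 0 1" by (simp only: cl)
      then show False using nz t by (simp add: mem_cball dist_norm)
    qed
  next
    have "isCont (\<lambda>t. t * rhorad t / t) r" if r: "r > 0" for r
    proof -
      have "((deriv ^^ 0) (\<lambda>t. t * rhorad t) has_real_derivative ((deriv ^^ Suc 0) (\<lambda>t. t * rhorad t)) r) (at r)"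
        using H2 r by blast
      then have "((\<lambda>t. t * rhorad t) has_real_derivative ((deriv ^^ Suc 0) (\<lambda>t. t * rhorad t)) r) (at r)"
        by simp
      then have "isCont (\<lambda>t. t * rhorad t) r" by (rule DERIV_isCont)
      then show ?thesis by (rule isCont_divide[OF _ continuous_ident]) (use r in simp)
    qed
    then have "continuous_on {0<..} (\<lambda>t. t * rhorad t / t)"
      by (intro continuous_at_imp_continuous_on) auto
    moreover have "\<And>t. t \<in> {0<..} \<Longrightarrow> t * rhorad t / t = rhorad t" by simp
    ultimately show "continuous_on {0<..} rhorad"
      using continuous_on_cong by (metis (no_types, lifting))
  qed
qed

lemma Tmat_bl: "bounded_linear (Tmat db d3)"
proof -
  have a: "Tmat db d3 (x + y) = Tmat db d3 x + Tmat db d3 y" for x y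
    unfolding Tmat_def by (rule vec_eq_iff[THEN iffD2]) (simp add: distrib_left)
  have b: "Tmat db d3 (c *\<^sub>R x) = c *\<^sub>R Tmat db d3 x" for c x
    unfolding Tmat_def by (rule vec_eq_iff[THEN iffD2]) (simp add: mult.left_commute)
  have "linear (Tmat db d3)" by (rule linearI[OF a b])
  then show ?thesis by (rule linear_conv_bounded_linear[THEN iffD1])
qed


theorem lemma2p2:
  fixes rhorad :: "real \<Rightarrow> real" and \<eta>0 \<nu> \<sigma> \<gamma> db d3 :: real
  assumes hyps: "kernel_hyps rhorad \<eta>0 \<nu> \<sigma> \<gamma>"
    and delta: "0 \<le> db" "db \<le> 1" "0 \<le> d3" "d3 \<le> 1"
  shows "(\<forall>\<phi>. smooth3 \<phi> \<longrightarrow> smooth3 (Qop rhorad db d3 \<phi>))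
    \<and> (\<forall>\<phi>. smooth3 \<phi> \<longrightarrow> (\<forall>x. grad3 (Qop rhorad db d3 \<phi>) x = Qop_vec rhorad db d3 (grad3 \<phi>) x))
    \<and> (\<forall>\<psi>. smooth3_field \<psi> \<longrightarrow> (\<forall>x. div3 (Qop_vec rhorad db d3 \<psi>) x = Qop rhorad db d3 (div3 \<psi>) x))
    \<and> (\<forall>\<phi> \<psi>. smooth3 \<phi> \<and> compact_support \<phi> \<and> smooth3_field \<psi> \<and> compact_support \<psi> \<longrightarrow>
         (LINT x|lborel. grad3 (Qop rhorad db d3 \<phi>) x \<bullet> \<psi> x)
           = - (LINT x|lborel. \<phi> x * div3 (Qop_vec rhorad db d3 \<psi>) x))"
proof -
  interpret r: rk rhorad by (rule hyps_rk[OF hyps])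
  interpret kk: kop "Qrho rhorad" "Tmat db d3" 1
    by (rule kop.intro[OF r.Q_meas r.Q_int r.Q_vanish Tmat_bl zero_less_one])
  have Qe: "Qop rhorad db d3 = opK (Qrho rhorad) (Tmat db d3)"
    by (intro ext) (simp add: Qop_def opK_def)
  have Qve: "Qop_vec rhorad db d3 F = (\<lambda>x. \<chi> i. opK (Qrho rhorad) (Tmat db d3) (\<lambda>y. F y $ i) x)" for F
    by (rule ext) (simp add: Qop_vec_def Qe)
  show ?thesis unfolding Qve Qe by (rule kk.main_generic[OF r.Q_sym])
qed



end
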